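(* Let $K$ be a self-similar compact set of ratio $\rho$ and module $\mu$, and put $T_u=K^{(u)}\setminus K^{(u+1)}$ for $u\ge0$. Then for every integer $n\ge1$ and every ordinal $0\le\alpha\le\omega^\omega$, $K^{(n)}[\alpha]=K[\omega^n(1+\alpha)]$. Moreover, for every ordinal $0\le\alpha<\omega^\omega$, \[T_0[\alpha]=\begin{cases}K[\alpha]&\text{if }\alpha<\omega,\\ K[\alpha+1]&\text{if }\alpha\ge\omega,\end{cases}\qquad\text{and}\qquad T_u[\alpha]=K[\omega^u(\alpha+1)]\ \text{ for } u\ge1.\]
   Context: For $A\subset\mathbf{R}$, $A'$ denotes the derived set of $A$, $A^{(0)}=A$, $A^{(n+1)}=(A^{(n)})'$. The reverse usual order is $x\preccurlyeq y$ iff $x\ge y$. A self-similar compact set of ratio $\rho>1$ and module $\mu\in\mathbf{N}$ is a compact set $K\subset[0,+\infty)$ with $\rho K^{(\mu)}=K$, well ordered by $\preccurlyeq$, of order type $\omega^\omega+1$. For a set $L\subset\mathbf{R}$ well ordered by $\preccurlyeq$ and an ordinal $\alpha$ less than its order type, $L[\alpha]$ denotes the element of $L$ in position $\alpha$ for $\preccurlyeq$ (positions start at $0$). Ordinal arithmetic is the standard one. *)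

theory Defs
  imports "HOL-Analysis.Analysis" "HOL-Library.Poly_Mapping"
begin

text \<open>An ordinal below omega^omega is written uniquely in Cantor normal form
  omega^k c_k + ... + omega c_1 + c_0; we store it as the finitely supported
  coefficient map i -> c_i.  The constructor OmegaOmega is omega^omega itself.
  The type thus contains exactly the ordinals alpha with alpha <= omega^omega.\<close>

datatype ordww = Below "nat \<Rightarrow>\<^sub>0 nat" | OmegaOmega

definition top_exp :: "(nat \<Rightarrow>\<^sub>0 nat) \<Rightarrow> nat" where
  "top_exp f = Max (Poly_Mapping.keys f)"

definition cnf_less :: "(nat \<Rightarrow>\<^sub>0 nat) \<Rightarrow> (nat \<Rightarrow>\<^sub>0 nat) \<Rightarrow> bool" where
  "cnf_less f g \<longleftrightarrow> f \<noteq> g \<and>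
     (let m = Max {i. Poly_Mapping.lookup f i \<noteq> Poly_Mapping.lookup g i} in Poly_Mapping.lookup f m < Poly_Mapping.lookup g m)"

definition cnf_add :: "(nat \<Rightarrow>\<^sub>0 nat) \<Rightarrow> (nat \<Rightarrow>\<^sub>0 nat) \<Rightarrow> (nat \<Rightarrow>\<^sub>0 nat)" where
  "cnf_add f g = (if g = 0 then f else
     (let e = top_exp g in Abs_poly_mapping (\<lambda>i.
        if e < i then Poly_Mapping.lookup f i else if i = e then Poly_Mapping.lookup f i + Poly_Mapping.lookup g i else Poly_Mapping.lookup g i)))"

definition cnf_mult :: "(nat \<Rightarrow>\<^sub>0 nat) \<Rightarrow> (nat \<Rightarrow>\<^sub>0 nat) \<Rightarrow> (nat \<Rightarrow>\<^sub>0 nat)" where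
  "cnf_mult f g = (if f = 0 \<or> g = 0 then 0 else
     (let e = top_exp f in Abs_poly_mapping (\<lambda>i.
        if e < i then Poly_Mapping.lookup g (i - e)
        else if Poly_Mapping.lookup g 0 = 0 then 0
        else if i = e then Poly_Mapping.lookup f e * Poly_Mapping.lookup g 0
        else Poly_Mapping.lookup f i)))"

text \<open>Results that would exceed omega^omega (only possible as OmegaOmega + beta with
  beta > 0, or OmegaOmega * beta with beta > 1) are not ordinals of this type;
  they are sent to OmegaOmega by convention and never occur in the statement.\<close>

instantiation ordww :: "{zero, one, plus, times, ord}"
begin

definition zero_ordww :: ordww where "zero_ordww = Below 0"

definition one_ordww :: ordww where "one_ordww = Below (Poly_Mapping.single 0 1)"

definition less_ordww :: "ordww \<Rightarrow> ordww \<Rightarrow> bool" where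
  "less_ordww a b = (case (a, b) of
      (Below f, Below g) \<Rightarrow> cnf_less f g
    | (Below f, OmegaOmega) \<Rightarrow> True
    | (OmegaOmega, _) \<Rightarrow> False)"

definition less_eq_ordww :: "ordww \<Rightarrow> ordww \<Rightarrow> bool" where
  "less_eq_ordww a b = (a = b \<or> a < b)"

definition plus_ordww :: "ordww \<Rightarrow> ordww \<Rightarrow> ordww" where
  "plus_ordww a b = (case (a, b) of
      (Below f, Below g) \<Rightarrow> Below (cnf_add f g)
    | (Below f, OmegaOmega) \<Rightarrow> OmegaOmega
    | (OmegaOmega, _) \<Rightarrow> OmegaOmega)"

definition times_ordww :: "ordww \<Rightarrow> ordww \<Rightarrow> ordww" where
  "times_ordww a b = (case (a, b) of
      (Below f, Below g) \<Rightarrow> Below (cnf_mult f g)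
    | (Below f, OmegaOmega) \<Rightarrow> (if f = 0 then Below 0 else OmegaOmega)
    | (OmegaOmega, Below g) \<Rightarrow> (if g = 0 then Below 0 else OmegaOmega)
    | (OmegaOmega, OmegaOmega) \<Rightarrow> OmegaOmega)"

instance ..
end

definition omega_pow :: "nat \<Rightarrow> ordww" where
  "omega_pow n = Below (Poly_Mapping.single n 1)"

abbreviation omega :: ordww where "omega \<equiv> omega_pow 1"

definition derived :: "real set \<Rightarrow> real set" where
  "derived A = {x. x islimpt A}"

definition rev_otype :: "real set \<Rightarrow> ordww \<Rightarrow> bool" where
  "rev_otype S \<alpha> \<longleftrightarrow> (\<exists>f. bij_betw f {\<beta>. \<beta> < \<alpha>} S \<and>
      (\<forall>\<beta> \<gamma>. \<beta> < \<alpha> \<longrightarrow> \<gamma> < \<alpha> \<longrightarrow> \<beta> < \<gamma> \<longrightarrow> f \<gamma> < f \<beta>))"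

definition rev_otype_ww1 :: "real set \<Rightarrow> bool" where
  "rev_otype_ww1 S \<longleftrightarrow> (\<exists>f. bij_betw f {\<beta>. \<beta> \<le> OmegaOmega} S \<and>
      (\<forall>\<beta> \<gamma>. \<beta> < \<gamma> \<longrightarrow> f \<gamma> < f \<beta>))"

definition is_at :: "real set \<Rightarrow> ordww \<Rightarrow> real \<Rightarrow> bool" where
  "is_at L \<alpha> x \<longleftrightarrow> x \<in> L \<and> rev_otype {y \<in> L. x < y} \<alpha>"

definition ord_at :: "real set \<Rightarrow> ordww \<Rightarrow> real" where
  "ord_at L \<alpha> = (THE x. is_at L \<alpha> x)"

definition self_similar :: "real set \<Rightarrow> real \<Rightarrow> nat \<Rightarrow> bool" where
  "self_similar K \<rho> \<mu> \<longleftrightarrow> \<rho> > 1 \<and> compact K \<and> K \<subseteq> {0..} \<and>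
     (\<lambda>x. \<rho> * x) ` ((derived ^^ \<mu>) K) = K \<and> rev_otype_ww1 K"

end

theory Submission
  imports Defs "HOL-Library.Multiset_Order"
begin

lemma cnf_less_iff:
  "cnf_less f g \<longleftrightarrow> (\<exists>m. Poly_Mapping.lookup f m < Poly_Mapping.lookup g m \<and> (\<forall>i>m. Poly_Mapping.lookup f i = Poly_Mapping.lookup g i))"
proof -
  let ?S = "{i. Poly_Mapping.lookup f i \<noteq> Poly_Mapping.lookup g i}"
  have fin: "finite ?S"
    by (rule finite_subset[of _ "{k. Poly_Mapping.lookup f k \<noteq> 0} \<union> {k. Poly_Mapping.lookup g k \<noteq> 0}"]) auto
  show ?thesis
  proof
    assume "cnf_less f g"
    then have ne: "f \<noteq> g" and lt: "Poly_Mapping.lookup f (Max ?S) < Poly_Mapping.lookup g (Max ?S)"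
      unfolding cnf_less_def Let_def by auto
    have "\<forall>i>Max ?S. Poly_Mapping.lookup f i = Poly_Mapping.lookup g i"
      using Max_ge[OF fin] by (metis (mono_tags, lifting) mem_Collect_eq not_le)
    then show "\<exists>m. Poly_Mapping.lookup f m < Poly_Mapping.lookup g m \<and> (\<forall>i>m. Poly_Mapping.lookup f i = Poly_Mapping.lookup g i)" using lt by blast
  next
    assume "\<exists>m. Poly_Mapping.lookup f m < Poly_Mapping.lookup g m \<and> (\<forall>i>m. Poly_Mapping.lookup f i = Poly_Mapping.lookup g i)"
    then obtain m where m: "Poly_Mapping.lookup f m < Poly_Mapping.lookup g m" "\<forall>i>m. Poly_Mapping.lookup f i = Poly_Mapping.lookup g i" by blast
    have mS: "m \<in> ?S" using m by auto
    have "Max ?S = m"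
      using m mS fin by (intro Max_eqI) (auto simp: not_less[symmetric])
    moreover have "f \<noteq> g" using m by auto
    ultimately show "cnf_less f g" unfolding cnf_less_def Let_def using m by auto
  qed
qed

lemma cnf_less_irrefl: "\<not> cnf_less f f"
  by (auto simp: cnf_less_iff)

lemma cnf_less_trans: "cnf_less f g \<Longrightarrow> cnf_less g h \<Longrightarrow> cnf_less f h"
  unfolding cnf_less_iff
proof (elim exE conjE)
  fix m1 m2
  assume a: "Poly_Mapping.lookup f m1 < Poly_Mapping.lookup g m1" "\<forall>i>m1. Poly_Mapping.lookup f i = Poly_Mapping.lookup g i"
     and b: "Poly_Mapping.lookup g m2 < Poly_Mapping.lookup h m2" "\<forall>i>m2. Poly_Mapping.lookup g i = Poly_Mapping.lookup h i"
  show "\<exists>m. Poly_Mapping.lookup f m < Poly_Mapping.lookup h m \<and> (\<forall>i>m. Poly_Mapping.lookup f i = Poly_Mapping.lookup h i)"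
  proof (cases m1 m2 rule: linorder_cases)
    case less then show ?thesis using a b by (intro exI[of _ m2]) auto
  next
    case equal then show ?thesis using a b by (intro exI[of _ m2]) auto
  next
    case greater then show ?thesis using a b by (intro exI[of _ m1]) auto
  qed
qed

lemma cnf_less_total: "f \<noteq> g \<Longrightarrow> cnf_less f g \<or> cnf_less g f"
proof -
  assume ne: "f \<noteq> g"
  let ?S = "{i. Poly_Mapping.lookup f i \<noteq> Poly_Mapping.lookup g i}"
  have fin: "finite ?S"
    by (rule finite_subset[of _ "{k. Poly_Mapping.lookup f k \<noteq> 0} \<union> {k. Poly_Mapping.lookup g k \<noteq> 0}"]) auto
  have "?S \<noteq> {}" using ne by (metis (mono_tags, lifting) Collect_empty_eq poly_mapping_eqI)
  then have "Max ?S \<in> ?S" using fin by (rule Max_in[rotated])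
  moreover have "{i. Poly_Mapping.lookup g i \<noteq> Poly_Mapping.lookup f i} = ?S" by auto
  ultimately show ?thesis unfolding cnf_less_def Let_def using ne
    by (metis (mono_tags, lifting) linorder_neqE_nat mem_Collect_eq)
qed

definition ms :: "(nat \<Rightarrow>\<^sub>0 nat) \<Rightarrow> nat multiset" where
  "ms f = Abs_multiset (Poly_Mapping.lookup f)"

lemma count_ms: "count (ms f) = Poly_Mapping.lookup f"
proof -
  have "{x. 0 < Poly_Mapping.lookup f x} = {x. Poly_Mapping.lookup f x \<noteq> 0}" by auto
  then have "finite {x. 0 < Poly_Mapping.lookup f x}" by simp
  then show ?thesis unfolding ms_def by (rule count_Abs_multiset)
qed

lemma cnf_less_ms: "cnf_less f g \<Longrightarrow> ms f < ms g"
proof -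
  assume "cnf_less f g"
  then obtain m where m: "Poly_Mapping.lookup f m < Poly_Mapping.lookup g m"
     "\<forall>i>m. Poly_Mapping.lookup f i = Poly_Mapping.lookup g i" unfolding cnf_less_iff by blast
  have "ms f \<noteq> ms g" using m(1) by (metis count_ms less_irrefl)
  moreover have "\<exists>x>y. count (ms f) x < count (ms g) x" if "count (ms g) y < count (ms f) y" for y
  proof -
    have "y \<noteq> m" "\<not> m < y" using that m unfolding count_ms by auto
    then have "m > y" by simp
    then show ?thesis using m(1) unfolding count_ms by blast
  qed
  ultimately show ?thesis unfolding less_multiset\<^sub>H\<^sub>O by blast
qed

lemma wf_cnf_less: "wf {(f, g). cnf_less f g}"
proof -
  have "{(f, g). cnf_less f g} \<subseteq> inv_image {(M, N). M < N} ms"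
    using cnf_less_ms by auto
  then show ?thesis using wf_less_multiset wf_inv_image wf_subset by blast
qed

lemma less_ordww_simps[simp]:
  "Below f < Below g \<longleftrightarrow> cnf_less f g"
  "Below f < OmegaOmega"
  "\<not> OmegaOmega < x"
  by (auto simp: less_ordww_def split: ordww.splits)

instance ordww :: wellorder
proof
  fix x y z :: ordww
  show "(x < y) = (x \<le> y \<and> \<not> y \<le> x)"
    unfolding less_eq_ordww_def
    by (cases x; cases y) (auto dest: cnf_less_trans simp: cnf_less_irrefl)
  show "x \<le> x" by (simp add: less_eq_ordww_def)
  show "x \<le> y \<Longrightarrow> y \<le> z \<Longrightarrow> x \<le> z"
    unfolding less_eq_ordww_def
    by (cases x; cases y; cases z) (auto dest: cnf_less_trans)
  show "x \<le> y \<Longrightarrow> y \<le> x \<Longrightarrow> x = y"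
    unfolding less_eq_ordww_def
    by (cases x; cases y) (auto dest: cnf_less_trans simp: cnf_less_irrefl)
  show "x \<le> y \<or> y \<le> x"
    unfolding less_eq_ordww_def
    by (cases x; cases y) (auto dest: cnf_less_total)
next
  fix P :: "ordww \<Rightarrow> bool" and a
  assume step: "\<And>x. (\<And>y. y < x \<Longrightarrow> P y) \<Longrightarrow> P x"
  have B: "P (Below f)" for f
    using wf_cnf_less
  proof (induction f rule: wf_induct_rule)
    case (less f)
    show ?case
    proof (rule step)
      fix y assume "y < Below f"
      then obtain g where "y = Below g" "cnf_less g f" by (cases y) auto
      then show "P y" using less by auto
    qed
  qed
  have "P OmegaOmega"
  proof (rule step)
    fix y assume "y < OmegaOmega"
    then show "P y" using B by (cases y) auto
  qed
  then show "P a" using B by (cases a) auto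
qed


abbreviation lk :: "(nat \<Rightarrow>\<^sub>0 nat) \<Rightarrow> nat \<Rightarrow> nat" where "lk \<equiv> Poly_Mapping.lookup"

lemma lk_single: "lk (Poly_Mapping.single k v) i = (if i = k then v else 0)"
  by (auto simp: lookup_single when_def)

lemma lk_add: "lk (a + b) i = lk a i + lk b i"
  by (rule lookup_add)

lemma mk_pm: "finite {i. h i \<noteq> 0} \<Longrightarrow> \<exists>p. lk p = h"
  by (rule exI[of _ "Abs_poly_mapping h"]) simp

lemma Abs_lk: "Abs_poly_mapping (lk p) = p" by simp

lemma Abs_eqI: "(\<And>i. h i = lk p i) \<Longrightarrow> Abs_poly_mapping h = p"
proof -
  assume "\<And>i. h i = lk p i"
  then have "h = lk p" by (rule ext)
  then show ?thesis by simp
qed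

lemma single_nz: "Poly_Mapping.single k v = 0 \<longleftrightarrow> v = 0"
  by (metis lookup_single_eq lookup_zero single_zero)

lemma pm_eq: "(\<And>i. lk f i = lk g i) \<Longrightarrow> f = g"
  by (rule poly_mapping_eqI)

lemma zero_ordww_Below: "(0::ordww) = Below 0" by (simp add: zero_ordww_def)

lemma not_less_zero_ordww: "\<not> (x::ordww) < 0"
  by (cases x) (auto simp: zero_ordww_def cnf_less_iff)

lemma zero_least: "(0::ordww) \<le> x"
  using not_less_zero_ordww[of x] by simp

lemma le_OO: "(x::ordww) \<le> OmegaOmega"
  by (cases x) (auto simp: less_eq_ordww_def)

definition fin :: "(nat \<Rightarrow>\<^sub>0 nat) \<Rightarrow> bool" where "fin a \<longleftrightarrow> (\<forall>i>0. lk a i = 0)"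

lemma keys_fin: "a \<noteq> 0 \<Longrightarrow> fin a \<Longrightarrow> top_exp a = 0"
proof -
  assume "a \<noteq> 0" "fin a"
  then have sub: "Poly_Mapping.keys a \<subseteq> {0}" unfolding fin_def by (auto simp: in_keys_iff)
  have "Poly_Mapping.keys a \<noteq> {}" using \<open>a \<noteq> 0\<close> by simp
  then have "Poly_Mapping.keys a = {0}" using sub by blast
  then show ?thesis by (simp add: top_exp_def)
qed

lemma keys_nfin: "\<not> fin a \<Longrightarrow> top_exp a > 0"
proof -
  assume "\<not> fin a"
  then obtain j where j: "j > 0" "lk a j \<noteq> 0" unfolding fin_def by auto
  then have "j \<in> Poly_Mapping.keys a" by (simp add: in_keys_iff)
  then have "j \<le> top_exp a" unfolding top_exp_def by simp
  then show ?thesis using j by simp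
qed

lemma top_exp_ge: "lk a i \<noteq> 0 \<Longrightarrow> i \<le> top_exp a"
  unfolding top_exp_def by (simp add: in_keys_iff)

lemma top_exp_in: "a \<noteq> 0 \<Longrightarrow> lk a (top_exp a) \<noteq> 0"
proof -
  assume "a \<noteq> 0"
  then have "Poly_Mapping.keys a \<noteq> {}" by simp
  then have "top_exp a \<in> Poly_Mapping.keys a" unfolding top_exp_def by (simp add: Max_in)
  then show ?thesis by (simp add: in_keys_iff)
qed

abbreviation s0 :: "nat \<Rightarrow>\<^sub>0 nat" where "s0 \<equiv> Poly_Mapping.single 0 1"

lemma plus1: "Below a + 1 = Below (a + s0)"
proof -
  have t: "top_exp s0 = 0" by (simp add: top_exp_def)
  have "cnf_add a s0 = a + s0"
    unfolding cnf_add_def Let_def t single_nz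
    by (simp, intro Abs_eqI) (simp add: lk_add lk_single)
  then show ?thesis by (simp add: plus_ordww_def one_ordww_def)
qed

lemma one_plus: "1 + Below a = Below (if fin a then a + s0 else a)"
proof -
  have "cnf_add s0 a = (if fin a then a + s0 else a)"
  proof (cases "a = 0")
    case True then show ?thesis by (simp add: cnf_add_def fin_def)
  next
    case False
    show ?thesis
    proof (cases "fin a")
      case True
      then have t: "top_exp a = 0" using False keys_fin by simp
      show ?thesis unfolding cnf_add_def Let_def t using False True
        by (simp, intro Abs_eqI) (auto simp: lk_add lk_single fin_def)
    next
      case nf: False
      have t: "top_exp a > 0" using keys_nfin nf by simp
      have "lk a i = 0" if "i > top_exp a" for i using top_exp_ge[of a i] that by force
      then show ?thesis unfolding cnf_add_def Let_def using False nf t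
        by (simp, intro Abs_eqI) (auto simp: lk_add lk_single)
    qed
  qed
  then show ?thesis by (simp add: plus_ordww_def one_ordww_def)
qed

lemma plus1_OO: "OmegaOmega + 1 = OmegaOmega" by (simp add: plus_ordww_def)
lemma one_plus_OO: "1 + OmegaOmega = OmegaOmega" by (simp add: plus_ordww_def one_ordww_def)

definition shift :: "nat \<Rightarrow> (nat \<Rightarrow>\<^sub>0 nat) \<Rightarrow> (nat \<Rightarrow>\<^sub>0 nat)" where
  "shift n b = Abs_poly_mapping (\<lambda>i. if n \<le> i then lk b (i - n) else 0)"

lemma lk_shift: "lk (shift n b) i = (if n \<le> i then lk b (i - n) else 0)"
proof -
  have "{i. (if n \<le> i then lk b (i - n) else 0) \<noteq> 0} \<subseteq> (\<lambda>j. j + n) ` {j. lk b j \<noteq> 0}"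
    by (auto simp: image_iff split: if_splits) (metis le_add_diff_inverse2)
  then have "finite {i. (if n \<le> i then lk b (i - n) else 0) \<noteq> 0}"
    by (rule finite_subset) simp
  then show ?thesis unfolding shift_def by simp
qed

lemma omega_mult: "omega_pow n * Below b = Below (shift n b)"
proof -
  have "cnf_mult (Poly_Mapping.single n 1) b = shift n b"
  proof (cases "b = 0")
    case True then show ?thesis by (intro pm_eq) (simp add: cnf_mult_def lk_shift)
  next
    case False
    have t: "top_exp (Poly_Mapping.single n 1) = n" by (simp add: top_exp_def)
    show ?thesis unfolding cnf_mult_def Let_def t shift_def
      apply (simp add: single_nz False)
      apply (rule arg_cong[where f=Abs_poly_mapping])
      apply (rule ext)
      apply (auto simp: lk_single)
      done
  qed
  then show ?thesis by (simp add: times_ordww_def omega_pow_def)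
qed

lemma omega_mult_OO: "omega_pow n * OmegaOmega = OmegaOmega"
  by (simp add: times_ordww_def omega_pow_def single_nz)

lemma less_omega: "Below a < omega \<longleftrightarrow> fin a"
proof
  assume "Below a < omega"
  then obtain m where m: "lk a m < lk (Poly_Mapping.single 1 1) m"
      "\<forall>i>m. lk a i = lk (Poly_Mapping.single 1 1) i"
    by (auto simp: omega_pow_def cnf_less_iff)
  then have "m = 1" by (auto simp: lk_single split: if_splits)
  then show "fin a" using m unfolding fin_def by (auto simp: lk_single split: if_splits)
      (metis One_nat_def less_one nat_neq_iff)
next
  assume "fin a"
  then show "Below a < omega"
    by (auto simp: omega_pow_def cnf_less_iff fin_def lk_single intro!: exI[of _ 1])
qed


definition Dn :: "nat \<Rightarrow> ordww \<Rightarrow> bool" where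
  "Dn n \<beta> \<longleftrightarrow> n = 0 \<or> (case \<beta> of Below c \<Rightarrow> c \<noteq> 0 \<and> (\<forall>i<n. lk c i = 0) | OmegaOmega \<Rightarrow> True)"

lemma Dn_OO[simp]: "Dn n OmegaOmega" by (simp add: Dn_def)
lemma Dn_Below: "Dn n (Below c) \<longleftrightarrow> n = 0 \<or> (c \<noteq> 0 \<and> (\<forall>i<n. lk c i = 0))" by (simp add: Dn_def)

lemma cnf_less_asym: "cnf_less a b \<Longrightarrow> \<not> cnf_less b a"
  using cnf_less_trans cnf_less_irrefl by blast

lemma nz_ex: "c \<noteq> 0 \<Longrightarrow> \<exists>j. lk c j \<noteq> 0"
proof (rule ccontr)
  assume "c \<noteq> 0" "\<not> (\<exists>j. lk c j \<noteq> 0)"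
  then have "c = 0" by (intro pm_eq) auto
  then show False using \<open>c \<noteq> 0\<close> by simp
qed

lemma L1_rev:
  assumes "Dn (Suc n) \<beta>"
  shows "\<beta> \<noteq> 0 \<and> (\<forall>\<gamma><\<beta>. \<exists>\<delta>. Dn n \<delta> \<and> \<gamma> < \<delta> \<and> \<delta> < \<beta>)"
proof (cases \<beta>)
  case OmegaOmega
  have "\<exists>\<delta>. Dn n \<delta> \<and> \<gamma> < \<delta> \<and> \<delta> < \<beta>" if "\<gamma> < \<beta>" for \<gamma>
  proof -
    have "\<gamma> \<noteq> OmegaOmega" using that OmegaOmega by auto
    then obtain h where h: "\<gamma> = Below h" by (cases \<gamma>) auto
    define k where "k = Suc (n + top_exp h)"
    have hz: "lk h i = 0" if "i \<ge> k" for i using top_exp_ge[of h i] that unfolding k_def by force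
    have "Dn n (Below (Poly_Mapping.single k 1))"
      unfolding Dn_Below by (auto simp: lk_single k_def single_nz)
    moreover have "\<gamma> < Below (Poly_Mapping.single k 1)"
      unfolding h less_ordww_simps cnf_less_iff
      by (rule exI[of _ k]) (auto simp: lk_single hz)
    ultimately show ?thesis using OmegaOmega by auto
  qed
  then show ?thesis using OmegaOmega by (simp add: zero_ordww_def)
next
  case (Below g)
  have gnz: "g \<noteq> 0" and gl: "\<forall>i<Suc n. lk g i = 0" using assms Below by (auto simp: Dn_Below)
  define m0 where "m0 = (LEAST i. lk g i \<noteq> 0)"
  have gm0: "lk g m0 \<noteq> 0" unfolding m0_def using nz_ex[OF gnz] by (rule LeastI_ex)
  have m0le: "lk g i \<noteq> 0 \<Longrightarrow> m0 \<le> i" for i unfolding m0_def by (rule Least_le)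
  have m0n: "Suc n \<le> m0"
  proof (rule ccontr)
    assume "\<not> Suc n \<le> m0"
    then have "m0 < Suc n" by simp
    then have "lk g m0 = 0" using gl by simp
    then show False using gm0 by simp
  qed
  have "\<exists>\<delta>. Dn n \<delta> \<and> \<gamma> < \<delta> \<and> \<delta> < \<beta>" if lt: "\<gamma> < \<beta>" for \<gamma>
  proof -
    obtain h where h: "\<gamma> = Below h" "cnf_less h g" by (cases \<gamma>) (use lt Below in auto)
    define dd where "dd = (\<lambda>i. if m0 < i then lk g i else if i = m0 then lk g m0 - 1
                         else if i = m0 - 1 then lk h (m0 - 1) + 1 else 0)"
    have fin_dd: "finite {i. dd i \<noteq> 0}"
      by (rule finite_subset[of _ "insert (m0 - 1) {i. lk g i \<noteq> 0}"]) (auto simp: dd_def split: if_splits)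
    obtain d where d: "lk d = dd" using mk_pm[OF fin_dd] by blast
    have mm: "m0 - 1 \<noteq> m0" "\<not> m0 < m0 - 1" "m0 - 1 < m0" using m0n by auto
    have d1: "lk d (m0 - 1) \<noteq> 0" using mm by (simp add: d dd_def)
    have "Dn n (Below d)" unfolding Dn_Below
    proof (intro disjI2 conjI allI impI)
      show "d \<noteq> 0" using d1 by auto
      fix i assume "i < n" then show "lk d i = 0" using m0n by (simp add: d dd_def)
    qed
    moreover have "Below d < \<beta>" unfolding Below less_ordww_simps cnf_less_iff
      using gm0 by (intro exI[of _ m0]) (auto simp: d dd_def)
    moreover have "\<gamma> < Below d"
    proof -
      obtain m1 where m1: "lk h m1 < lk g m1" "\<forall>i>m1. lk h i = lk g i" using h(2) cnf_less_iff by blast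
      have "m0 \<le> m1" using m1(1) by (intro m0le) simp
      show ?thesis
      proof (cases "m0 < m1")
        case True then show ?thesis unfolding h less_ordww_simps cnf_less_iff
          using m1 by (intro exI[of _ m1]) (auto simp: d dd_def)
      next
        case False
        then have e: "m1 = m0" using \<open>m0 \<le> m1\<close> by simp
        show ?thesis
        proof (cases "lk h m0 < lk d m0")
          case True then show ?thesis unfolding h less_ordww_simps cnf_less_iff
            using m1 e by (intro exI[of _ m0]) (auto simp: d dd_def)
        next
          case False
          then have hm0: "lk h m0 = lk d m0" using m1 e by (simp add: d dd_def)
          show ?thesis unfolding h less_ordww_simps cnf_less_iff
          proof (intro exI[of _ "m0 - 1"] conjI allI impI)
            show "lk h (m0 - 1) < lk d (m0 - 1)" using mm by (simp add: d dd_def)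
            fix i assume "m0 - 1 < i"
            then have "i = m0 \<or> m0 < i" by auto
            then show "lk h i = lk d i" using hm0 m1 e by (auto simp: d dd_def)
          qed
        qed
      qed
    qed
    ultimately show ?thesis by blast
  qed
  moreover have "\<beta> \<noteq> 0" using gnz Below by (simp add: zero_ordww_def)
  ultimately show ?thesis by blast
qed

lemma L1_fwd:
  assumes "\<beta> \<noteq> 0" and lim: "\<forall>\<gamma><\<beta>. \<exists>\<delta>. Dn n \<delta> \<and> \<gamma> < \<delta> \<and> \<delta> < \<beta>"
  shows "Dn (Suc n) \<beta>"
proof (cases \<beta>)
  case OmegaOmega then show ?thesis by simp
next
  case (Below g)
  have gnz: "g \<noteq> 0" using assms(1) Below by (simp add: zero_ordww_def)
  show ?thesis
  proof (rule ccontr)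
    assume "\<not> Dn (Suc n) \<beta>"
    then obtain i0 where i0: "i0 < Suc n" "lk g i0 \<noteq> 0" using Below gnz by (auto simp: Dn_Below)
    define m0 where "m0 = (LEAST i. lk g i \<noteq> 0)"
    have gm0: "lk g m0 \<noteq> 0" unfolding m0_def using i0(2) by (rule LeastI)
    have m0le: "lk g i \<noteq> 0 \<Longrightarrow> m0 \<le> i" for i unfolding m0_def by (rule Least_le)
    have m0n: "m0 \<le> n" using m0le[OF i0(2)] i0(1) by simp
    define cc where "cc = (\<lambda>i. if i = m0 then lk g m0 - 1 else lk g i)"
    have fin_cc: "finite {i. cc i \<noteq> 0}"
      by (rule finite_subset[of _ "{i. lk g i \<noteq> 0}"]) (auto simp: cc_def split: if_splits)
    obtain c where c: "lk c = cc" using mk_pm[OF fin_cc] by blast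
    have "Below c < \<beta>" unfolding Below less_ordww_simps cnf_less_iff
      using gm0 by (intro exI[of _ m0]) (auto simp: c cc_def)
    then have "\<exists>\<delta>. Dn n \<delta> \<and> Below c < \<delta> \<and> \<delta> < \<beta>" using lim by simp
    then obtain \<delta> where \<delta>: "Dn n \<delta>" "Below c < \<delta>" "\<delta> < \<beta>" by (elim exE conjE) simp
    obtain d where d: "\<delta> = Below d" by (cases \<delta>) (use \<delta>(3) Below in auto)
    obtain m1 where m1: "lk c m1 < lk d m1" "\<forall>i>m1. lk c i = lk d i"
      using \<delta>(2) d cnf_less_iff by auto
    obtain m2 where m2: "lk d m2 < lk g m2" "\<forall>i>m2. lk d i = lk g i"
      using \<delta>(3) d Below cnf_less_iff by auto
    have "m0 \<le> m2" using m2(1) by (intro m0le) simp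
    have "\<not> m0 < m2"
    proof
      assume "m0 < m2"
      have "cnf_less d c" unfolding cnf_less_iff
        using m2 \<open>m0 < m2\<close> by (intro exI[of _ m2]) (auto simp: c cc_def)
      then show False using \<delta>(2) d cnf_less_asym by auto
    qed
    then have e2: "m2 = m0" using \<open>m0 \<le> m2\<close> by simp
    have "\<not> m0 < m1"
    proof
      assume "m0 < m1"
      then show False using m1(1) m2(2) e2 by (simp add: c cc_def)
    qed
    moreover have "m1 \<noteq> m0"
    proof
      assume "m1 = m0"
      then have "lk c m0 < lk d m0" "lk d m0 < lk g m0" "lk c m0 = lk g m0 - 1"
        using m1(1) m2(1) e2 by (auto simp: c cc_def)
      then show False by linarith
    qed
    ultimately have "m1 < m0" by simp
    then have "lk d m1 \<noteq> 0" "m1 < n" using m1(1) m0n by auto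
    then show False using \<delta>(1) d by (auto simp: Dn_Below)
  qed
qed

lemma L1: "(\<beta> \<noteq> 0 \<and> (\<forall>\<gamma><\<beta>. \<exists>\<delta>. Dn n \<delta> \<and> \<gamma> < \<delta> \<and> \<delta> < \<beta>)) \<longleftrightarrow> Dn (Suc n) \<beta>"
proof
  assume "\<beta> \<noteq> 0 \<and> (\<forall>\<gamma><\<beta>. \<exists>\<delta>. Dn n \<delta> \<and> \<gamma> < \<delta> \<and> \<delta> < \<beta>)"
  then show "Dn (Suc n) \<beta>" using L1_fwd by blast
next
  assume "Dn (Suc n) \<beta>"
  then show "\<beta> \<noteq> 0 \<and> (\<forall>\<gamma><\<beta>. \<exists>\<delta>. Dn n \<delta> \<and> \<gamma> < \<delta> \<and> \<delta> < \<beta>)" by (rule L1_rev)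
qed


locale posK =
  fixes K :: "real set" and f :: "ordww \<Rightarrow> real"
  assumes cK: "compact K" and bijf: "bij_betw f UNIV K"
    and dec: "\<And>\<beta> \<gamma>. \<beta> < \<gamma> \<Longrightarrow> f \<gamma> < f \<beta>"
begin

lemma K_eq: "K = range f" using bijf by (simp add: bij_betw_def)
lemma fK: "f \<beta> \<in> K" using K_eq by simp
lemma inj_f: "inj f" using bijf by (simp add: bij_betw_def)

lemma less_iff: "f \<gamma> < f \<beta> \<longleftrightarrow> \<beta> < \<gamma>"
proof
  assume a: "f \<gamma> < f \<beta>"
  show "\<beta> < \<gamma>"
  proof (rule ccontr)
    assume "\<not> \<beta> < \<gamma>"
    then have "\<gamma> = \<beta> \<or> \<gamma> < \<beta>" by auto
    then show False using a dec[of \<gamma> \<beta>] by auto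
  qed
qed (rule dec)

lemma le_iff: "f \<gamma> \<le> f \<beta> \<longleftrightarrow> \<beta> \<le> \<gamma>"
  using less_iff[of \<beta> \<gamma>] by (simp add: not_less[symmetric])

lemma inf_limit:
  assumes "\<beta> \<noteq> 0" and lim: "\<forall>\<gamma><\<beta>. \<exists>\<delta>. \<gamma> < \<delta> \<and> \<delta> < \<beta>" and "e > 0"
  shows "\<exists>\<gamma><\<beta>. f \<gamma> < f \<beta> + e"
proof (rule ccontr)
  assume nt: "\<not> (\<exists>\<gamma><\<beta>. f \<gamma> < f \<beta> + e)"
  have H: "f \<beta> + e \<le> f \<gamma>" if "\<gamma> < \<beta>" for \<gamma>
  proof (rule ccontr)
    assume "\<not> f \<beta> + e \<le> f \<gamma>"
    then have "f \<gamma> < f \<beta> + e" by simp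
    then show False using nt that by auto
  qed
  let ?S = "f ` {\<gamma>. \<gamma> < \<beta>}"
  have "0 < \<beta>" using assms(1) zero_least[of \<beta>] by simp
  then have ne: "?S \<noteq> {}" by auto
  have SK: "?S \<subseteq> K" using fK by auto
  have "bdd_below K" using cK by (simp add: compact_imp_bounded bounded_imp_bdd_below)
  then have bb: "bdd_below ?S" using SK by (rule bdd_below_mono)
  have "Inf ?S \<in> closure ?S" using ne bb by (rule closure_contains_Inf)
  moreover have "closure ?S \<subseteq> K" using SK cK by (simp add: closure_minimal compact_imp_closed)
  ultimately have "Inf ?S \<in> K" by auto
  then obtain \<sigma> where \<sigma>: "Inf ?S = f \<sigma>" using K_eq by auto
  have "f \<beta> + e \<le> Inf ?S" using ne by (rule cInf_greatest) (auto intro: H)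
  then have "f \<beta> < f \<sigma>" using \<sigma> \<open>e > 0\<close> by simp
  then have "\<sigma> < \<beta>" by (simp add: less_iff)
  then obtain \<delta> where \<delta>: "\<sigma> < \<delta>" "\<delta> < \<beta>" using lim by blast
  have "Inf ?S \<le> f \<delta>" using bb \<delta>(2) by (intro cInf_lower) auto
  moreover have "f \<delta> < f \<sigma>" using \<delta>(1) by (rule dec)
  ultimately show False using \<sigma> by simp
qed

lemma limpt_iff: "f \<beta> islimpt f ` A \<longleftrightarrow> \<beta> \<noteq> 0 \<and> (\<forall>\<gamma><\<beta>. \<exists>\<delta>\<in>A. \<gamma> < \<delta> \<and> \<delta> < \<beta>)"
proof
  assume r: "\<beta> \<noteq> 0 \<and> (\<forall>\<gamma><\<beta>. \<exists>\<delta>\<in>A. \<gamma> < \<delta> \<and> \<delta> < \<beta>)"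
  show "f \<beta> islimpt f ` A"
    unfolding islimpt_approachable
  proof (intro allI impI)
    fix e :: real assume "e > 0"
    have "\<forall>\<gamma><\<beta>. \<exists>\<delta>. \<gamma> < \<delta> \<and> \<delta> < \<beta>" using r by blast
    then obtain \<gamma> where \<gamma>: "\<gamma> < \<beta>" "f \<gamma> < f \<beta> + e" using inf_limit r \<open>e > 0\<close> by blast
    then obtain \<delta> where \<delta>: "\<delta> \<in> A" "\<gamma> < \<delta>" "\<delta> < \<beta>" using r by blast
    have "f \<beta> < f \<delta>" "f \<delta> < f \<gamma>" using \<delta> by (auto intro: dec)
    then show "\<exists>x'\<in>f ` A. x' \<noteq> f \<beta> \<and> dist x' (f \<beta>) < e"
      using \<delta>(1) \<gamma>(2) by (intro bexI[of _ "f \<delta>"]) (auto simp: dist_real_def)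
  qed
next
  assume lp: "f \<beta> islimpt f ` A"
  define g where "g = (if \<exists>\<delta>. \<beta> < \<delta> then f \<beta> - f (LEAST \<delta>. \<beta> < \<delta>) else 1)"
  have gpos: "g > 0"
  proof (cases "\<exists>\<delta>. \<beta> < \<delta>")
    case True
    then have "\<beta> < (LEAST \<delta>. \<beta> < \<delta>)" by (rule LeastI_ex)
    then have "f (LEAST \<delta>. \<beta> < \<delta>) < f \<beta>" by (rule dec)
    then show ?thesis using True unfolding g_def by simp
  qed (simp add: g_def)
  have gap: "f \<delta> \<le> f \<beta> - g" if "f \<delta> < f \<beta>" for \<delta>
  proof -
    have b: "\<beta> < \<delta>" using that by (simp add: less_iff)
    then have "(LEAST \<delta>. \<beta> < \<delta>) \<le> \<delta>" by (rule Least_le)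
    then have "f \<delta> \<le> f (LEAST \<delta>. \<beta> < \<delta>)" by (simp add: le_iff)
    moreover have "\<exists>\<delta>. \<beta> < \<delta>" using b by blast
    then have "g = f \<beta> - f (LEAST \<delta>. \<beta> < \<delta>)" unfolding g_def by simp
    ultimately show ?thesis by linarith
  qed
  have near: "\<exists>\<delta>\<in>A. f \<beta> < f \<delta> \<and> f \<delta> < f \<beta> + e" if "e > 0" "e \<le> g" for e
  proof -
    have "\<forall>e>0. \<exists>x'\<in>f ` A. x' \<noteq> f \<beta> \<and> dist x' (f \<beta>) < e"
      using lp by (simp only: islimpt_approachable)
    then have "\<exists>x'\<in>f ` A. x' \<noteq> f \<beta> \<and> dist x' (f \<beta>) < e" using that(1) by simp
    then obtain x where x: "x \<in> f ` A" "x \<noteq> f \<beta>" "dist x (f \<beta>) < e" by (elim bexE conjE) simp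
    then obtain \<delta> where \<delta>: "\<delta> \<in> A" "x = f \<delta>" by auto
    have "\<not> f \<delta> < f \<beta>"
    proof
      assume "f \<delta> < f \<beta>"
      then have "f \<delta> \<le> f \<beta> - g" by (rule gap)
      then show False using x(3) \<delta>(2) that(2) by (auto simp: dist_real_def)
    qed
    then show ?thesis using x \<delta> by (intro bexI[of _ \<delta>]) (auto simp: dist_real_def)
  qed
  have "\<beta> \<noteq> 0"
  proof
    assume "\<beta> = 0"
    obtain \<delta> where "\<delta> \<in> A" "f \<beta> < f \<delta>" using near[of g] gpos by auto
    then have "\<delta> < \<beta>" by (simp add: less_iff)
    then show False using \<open>\<beta> = 0\<close> not_less_zero_ordww by simp
  qed
  moreover have "\<exists>\<delta>\<in>A. \<gamma> < \<delta> \<and> \<delta> < \<beta>" if "\<gamma> < \<beta>" for \<gamma>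
  proof -
    have "f \<beta> < f \<gamma>" using that by (rule dec)
    then obtain \<delta> where \<delta>: "\<delta> \<in> A" "f \<beta> < f \<delta>" "f \<delta> < f \<beta> + min g (f \<gamma> - f \<beta>)"
      using near[of "min g (f \<gamma> - f \<beta>)"] gpos by auto
    then have "f \<delta> < f \<gamma>" by simp
    then show ?thesis using \<delta> by (auto simp: less_iff)
  qed
  ultimately show "\<beta> \<noteq> 0 \<and> (\<forall>\<gamma><\<beta>. \<exists>\<delta>\<in>A. \<gamma> < \<delta> \<and> \<delta> < \<beta>)" by blast
qed

lemma derived_img: "derived (f ` A) = f ` {\<beta>. \<beta> \<noteq> 0 \<and> (\<forall>\<gamma><\<beta>. \<exists>\<delta>\<in>A. \<gamma> < \<delta> \<and> \<delta> < \<beta>)}"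
proof
  show "derived (f ` A) \<subseteq> f ` {\<beta>. \<beta> \<noteq> 0 \<and> (\<forall>\<gamma><\<beta>. \<exists>\<delta>\<in>A. \<gamma> < \<delta> \<and> \<delta> < \<beta>)}"
  proof
    fix x assume "x \<in> derived (f ` A)"
    then have x: "x islimpt f ` A" by (simp add: derived_def)
    have "f ` A \<subseteq> K" using fK by auto
    with x have "x islimpt K" by (rule islimpt_subset)
    moreover have "closed K" using cK by (rule compact_imp_closed)
    ultimately have "x \<in> K" unfolding closed_limpt by blast
    then obtain \<beta> where "x = f \<beta>" using K_eq by auto
    then show "x \<in> f ` {\<beta>. \<beta> \<noteq> 0 \<and> (\<forall>\<gamma><\<beta>. \<exists>\<delta>\<in>A. \<gamma> < \<delta> \<and> \<delta> < \<beta>)}"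
      using x limpt_iff by auto
  qed
  show "f ` {\<beta>. \<beta> \<noteq> 0 \<and> (\<forall>\<gamma><\<beta>. \<exists>\<delta>\<in>A. \<gamma> < \<delta> \<and> \<delta> < \<beta>)} \<subseteq> derived (f ` A)"
    using limpt_iff by (auto simp: derived_def)
qed

end


lemma less_omega1: "Below a < omega_pow (Suc 0) \<longleftrightarrow> fin a"
  using less_omega[of a] by simp

lemma shift_zero: "shift n 0 = 0"
  by (rule pm_eq) (simp add: lk_shift)

lemma Below_lt_OO: "Below a < OmegaOmega" by simp
lemma lt_OO_Below: "(\<alpha>::ordww) < OmegaOmega \<Longrightarrow> \<exists>a. \<alpha> = Below a" by (cases \<alpha>) auto

lemma cnf_less_plus: "cnf_less a b \<Longrightarrow> cnf_less (a + s0) (b + s0)"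
  unfolding cnf_less_iff by (auto simp: lk_add)

lemma plus1_mono: "(\<alpha>::ordww) < \<beta> \<Longrightarrow> \<alpha> + 1 < \<beta> + 1"
proof (cases \<beta>)
  case OmegaOmega
  assume "\<alpha> < \<beta>"
  then obtain a where "\<alpha> = Below a" using OmegaOmega lt_OO_Below by blast
  then show ?thesis using OmegaOmega by (simp add: plus1 plus1_OO)
next
  case (Below b)
  assume "\<alpha> < \<beta>"
  then obtain a where a: "\<alpha> = Below a" "cnf_less a b" using Below by (cases \<alpha>) auto
  then show ?thesis using Below cnf_less_plus[OF a(2)] by (simp add: plus1)
qed

lemma less_plus1: "Below a < Below a + 1"
  unfolding plus1 less_ordww_simps cnf_less_iff by (rule exI[of _ 0]) (auto simp: lk_add lk_single)

lemma fin_plus: "fin (a + s0) \<longleftrightarrow> fin a"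
  unfolding fin_def by (auto simp: lk_add lk_single)

lemma fin_plus1: "fin (a + Poly_Mapping.single 0 (Suc 0)) \<longleftrightarrow> fin a"
  using fin_plus[of a] by simp

lemma lt_omega_plus1: "(\<alpha>::ordww) < omega \<Longrightarrow> \<alpha> + 1 < omega"
proof -
  assume "\<alpha> < omega"
  moreover then obtain a where a: "\<alpha> = Below a" by (cases \<alpha>) (auto simp: omega_pow_def)
  ultimately show ?thesis by (simp add: plus1 less_omega less_omega1 fin_plus fin_plus1)
qed

lemma one_plus': "1 + Below a = (if Below a < omega then Below a + 1 else Below a)"
  by (simp add: one_plus plus1 less_omega less_omega1)

lemma onep_mono: "(\<alpha>::ordww) < \<beta> \<Longrightarrow> 1 + \<alpha> < 1 + \<beta>"
proof (cases \<beta>)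
  case OmegaOmega
  assume "\<alpha> < \<beta>"
  then obtain a where "\<alpha> = Below a" using OmegaOmega lt_OO_Below by blast
  then show ?thesis using OmegaOmega by (simp add: one_plus one_plus_OO)
next
  case (Below b)
  assume lt: "\<alpha> < \<beta>"
  then obtain a where a: "\<alpha> = Below a" using Below by (cases \<alpha>) auto
  show ?thesis
  proof (cases "\<beta> < omega")
    case True
    then have "\<alpha> < omega" using lt by simp
    then show ?thesis using True lt plus1_mono a Below by (simp add: one_plus')
  next
    case False
    then have ge: "omega \<le> \<beta>" by simp
    show ?thesis
    proof (cases "\<alpha> < omega")
      case True
      then have "\<alpha> + 1 < omega" by (rule lt_omega_plus1)
      then have "\<alpha> + 1 < \<beta>" using ge by simp
      then show ?thesis using True False a Below by (simp add: one_plus')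
    next
      case F2: False
      then show ?thesis using False lt a Below by (simp add: one_plus')
    qed
  qed
qed

lemma shift_mono: "cnf_less a b \<Longrightarrow> cnf_less (shift n a) (shift n b)"
proof -
  assume "cnf_less a b"
  then obtain m where m: "lk a m < lk b m" "\<forall>i>m. lk a i = lk b i" unfolding cnf_less_iff by blast
  show ?thesis unfolding cnf_less_iff
  proof (intro exI[of _ "m + n"] conjI allI impI)
    show "lk (shift n a) (m + n) < lk (shift n b) (m + n)" using m(1) by (simp add: lk_shift)
    fix i assume "m + n < i"
    then have "n \<le> i" "m < i - n" by auto
    then show "lk (shift n a) i = lk (shift n b) i" using m(2) by (simp add: lk_shift)
  qed
qed

lemma times_mono: "(\<alpha>::ordww) < \<beta> \<Longrightarrow> omega_pow n * \<alpha> < omega_pow n * \<beta>"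
proof (cases \<beta>)
  case OmegaOmega
  assume "\<alpha> < \<beta>"
  then obtain a where "\<alpha> = Below a" using OmegaOmega lt_OO_Below by blast
  then show ?thesis using OmegaOmega by (simp add: omega_mult omega_mult_OO)
next
  case (Below b)
  assume "\<alpha> < \<beta>"
  then obtain a where a: "\<alpha> = Below a" "cnf_less a b" using Below by (cases \<alpha>) auto
  then show ?thesis using Below by (simp add: omega_mult shift_mono)
qed

definition h1 :: "nat \<Rightarrow> ordww \<Rightarrow> ordww" where "h1 n \<alpha> = omega_pow n * (1 + \<alpha>)"
definition h0 :: "ordww \<Rightarrow> ordww" where "h0 \<alpha> = (if \<alpha> < omega then \<alpha> else \<alpha> + 1)"
definition hu :: "nat \<Rightarrow> ordww \<Rightarrow> ordww" where "hu n \<alpha> = omega_pow n * (\<alpha> + 1)"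

lemma h1_mono: "\<alpha> < \<beta> \<Longrightarrow> h1 n \<alpha> < h1 n \<beta>"
  unfolding h1_def by (intro times_mono onep_mono)

lemma hu_mono: "\<alpha> < \<beta> \<Longrightarrow> hu n \<alpha> < hu n \<beta>"
  unfolding hu_def by (intro times_mono plus1_mono)

lemma h0_mono: "\<alpha> < \<beta> \<Longrightarrow> \<beta> < OmegaOmega \<Longrightarrow> h0 \<alpha> < h0 \<beta>"
proof -
  assume lt: "\<alpha> < \<beta>" and b: "\<beta> < OmegaOmega"
  obtain b' where b': "\<beta> = Below b'" using b lt_OO_Below by blast
  show ?thesis
  proof (cases "\<beta> < omega")
    case True
    then have "\<alpha> < omega" using lt less_trans by blast
    then show ?thesis using lt True unfolding h0_def by simp
  next
    case False
    show ?thesis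
    proof (cases "\<alpha> < omega")
      case True
      have "\<alpha> < \<beta> + 1" using lt less_plus1[of b'] b' by simp
      then show ?thesis using True False unfolding h0_def by simp
    next
      case F2: False
      then show ?thesis using False lt plus1_mono unfolding h0_def by simp
    qed
  qed
qed

lemma unshift_ex: "(\<forall>i<n. lk c i = 0) \<Longrightarrow> \<exists>b. shift n b = c"
proof -
  assume low: "\<forall>i<n. lk c i = 0"
  have "finite ((\<lambda>i. i + n) -` {j. lk c j \<noteq> 0})"
    by (rule finite_vimageI) (simp_all add: inj_on_def)
  moreover have "{i. lk c (i + n) \<noteq> 0} = (\<lambda>i. i + n) -` {j. lk c j \<noteq> 0}" by auto
  ultimately have "finite {i. lk c (i + n) \<noteq> 0}" by simp
  then obtain b where b: "lk b = (\<lambda>i. lk c (i + n))" using mk_pm[OF \<open>finite {i. lk c (i + n) \<noteq> 0}\<close>] by blast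
  have "shift n b = c"
  proof (rule pm_eq)
    fix i show "lk (shift n b) i = lk c i"
      using low by (cases "n \<le> i") (auto simp: lk_shift b)
  qed
  then show ?thesis by blast
qed

lemma lk_shift_add: "lk (shift n b) (j + n) = lk b j" by (simp add: lk_shift)

lemma sub1: "lk b 0 \<noteq> 0 \<Longrightarrow> \<exists>a. b = a + s0"
proof -
  assume b0: "lk b 0 \<noteq> 0"
  have fn: "finite {i. (if i = 0 then lk b 0 - 1 else lk b i) \<noteq> 0}"
    by (rule finite_subset[of _ "{i. lk b i \<noteq> 0}"]) auto
  obtain a where a: "lk a = (\<lambda>i. if i = 0 then lk b 0 - 1 else lk b i)" using mk_pm[OF fn] by blast
  have "b = a + s0" by (rule pm_eq) (use b0 in \<open>auto simp: a lk_add lk_single\<close>)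
  then show ?thesis by blast
qed

lemma fin_nz0: "fin a \<Longrightarrow> a \<noteq> 0 \<Longrightarrow> lk a 0 \<noteq> 0"
proof -
  assume "fin a" "a \<noteq> 0"
  then obtain j where "lk a j \<noteq> 0" using nz_ex by blast
  then show ?thesis using \<open>fin a\<close> unfolding fin_def by (cases j) auto
qed

lemma shift_nz: "b \<noteq> 0 \<Longrightarrow> shift n b \<noteq> 0"
proof -
  assume "b \<noteq> 0"
  then obtain j where "lk b j \<noteq> 0" using nz_ex by blast
  then have "lk (shift n b) (j + n) \<noteq> 0" by (simp add: lk_shift_add)
  then show ?thesis by auto
qed

lemma plus_s0_nz: "lk (a + s0) 0 \<noteq> 0" by (simp add: lk_add)

lemma img1: "n \<ge> 1 \<Longrightarrow> {\<beta>. Dn n \<beta>} = range (h1 n)"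
proof
  assume n: "n \<ge> 1"
  show "range (h1 n) \<subseteq> {\<beta>. Dn n \<beta>}"
  proof
    fix x assume "x \<in> range (h1 n)"
    then obtain \<alpha> where x: "x = h1 n \<alpha>" by auto
    show "x \<in> {\<beta>. Dn n \<beta>}"
    proof (cases \<alpha>)
      case OmegaOmega then show ?thesis using x by (simp add: h1_def one_plus_OO omega_mult_OO)
    next
      case (Below a)
      define bb where "bb = (if fin a then a + s0 else a)"
      have x': "x = Below (shift n bb)" using x Below by (simp add: h1_def one_plus omega_mult bb_def)
      have "bb \<noteq> 0"
      proof (cases "fin a")
        case True then show ?thesis using plus_s0_nz[of a] unfolding bb_def by auto
      next
        case False
        moreover have "fin 0" by (simp add: fin_def)
        ultimately show ?thesis unfolding bb_def by auto
      qed
      then show ?thesis using x' shift_nz by (auto simp: Dn_Below lk_shift)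
    qed
  qed
  show "{\<beta>. Dn n \<beta>} \<subseteq> range (h1 n)"
  proof
    fix \<beta> assume "\<beta> \<in> {\<beta>. Dn n \<beta>}"
    then have D: "Dn n \<beta>" by simp
    show "\<beta> \<in> range (h1 n)"
    proof (cases \<beta>)
      case OmegaOmega
      then have "\<beta> = h1 n OmegaOmega" by (simp add: h1_def one_plus_OO omega_mult_OO)
      then show ?thesis by blast
    next
      case (Below c)
      then have c: "c \<noteq> 0" "\<forall>i<n. lk c i = 0" using D n by (auto simp: Dn_Below)
      obtain b where b: "shift n b = c" using unshift_ex[OF c(2)] by blast
      have bnz: "b \<noteq> 0" using c(1) b shift_zero by auto
      show ?thesis
      proof (cases "fin b")
        case True
        then have "lk b 0 \<noteq> 0" using bnz by (rule fin_nz0)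
        then obtain a where a: "b = a + s0" using sub1 by blast
        then have "fin a" using True by (simp add: fin_plus fin_plus1)
        then have "h1 n (Below a) = \<beta>" using a b Below by (simp add: h1_def one_plus omega_mult)
        then show ?thesis by (metis rangeI)
      next
        case False
        then have "h1 n (Below b) = \<beta>" using b Below by (simp add: h1_def one_plus omega_mult)
        then show ?thesis by (metis rangeI)
      qed
    qed
  qed
qed

lemma img0: "{\<beta>. \<not> Dn 1 \<beta>} = h0 ` {\<alpha>. \<alpha> < OmegaOmega}"
proof
  show "h0 ` {\<alpha>. \<alpha> < OmegaOmega} \<subseteq> {\<beta>. \<not> Dn 1 \<beta>}"
  proof
    fix x assume "x \<in> h0 ` {\<alpha>. \<alpha> < OmegaOmega}"
    then obtain \<alpha> where x: "x = h0 \<alpha>" "\<alpha> < OmegaOmega" by auto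
    then obtain a where a: "\<alpha> = Below a" using lt_OO_Below by blast
    show "x \<in> {\<beta>. \<not> Dn 1 \<beta>}"
    proof (cases "fin a")
      case True
      then have "x = Below a" using x a by (simp add: h0_def less_omega less_omega1)
      moreover have "a = 0 \<or> lk a 0 \<noteq> 0" using True fin_nz0 by blast
      ultimately show ?thesis by (auto simp: Dn_Below)
    next
      case False
      then have "x = Below (a + s0)" using x a by (simp add: h0_def less_omega less_omega1 plus1)
      then show ?thesis using plus_s0_nz[of a] by (auto simp: Dn_Below)
    qed
  qed
  show "{\<beta>. \<not> Dn 1 \<beta>} \<subseteq> h0 ` {\<alpha>. \<alpha> < OmegaOmega}"
  proof
    fix \<beta> assume "\<beta> \<in> {\<beta>. \<not> Dn 1 \<beta>}"
    then have nD: "\<not> Dn 1 \<beta>" by simp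
    then obtain c where c: "\<beta> = Below c" by (cases \<beta>) auto
    have c0: "c = 0 \<or> lk c 0 \<noteq> 0" using nD c by (auto simp: Dn_Below)
    show "\<beta> \<in> h0 ` {\<alpha>. \<alpha> < OmegaOmega}"
    proof (cases "fin c")
      case True
      then have "h0 (Below c) = \<beta>" using c by (simp add: h0_def less_omega less_omega1)
      then show ?thesis by force
    next
      case False
      then have "c \<noteq> 0" by (auto simp: fin_def)
      then have "lk c 0 \<noteq> 0" using c0 by simp
      then obtain a where a: "c = a + s0" using sub1 by blast
      then have "\<not> fin a" using False by (simp add: fin_plus fin_plus1)
      then have "h0 (Below a) = \<beta>" using a c by (simp add: h0_def less_omega less_omega1 plus1)
      then show ?thesis by force
    qed
  qed
qed

lemma imgu: "u \<ge> 1 \<Longrightarrow> {\<beta>. Dn u \<beta> \<and> \<not> Dn (Suc u) \<beta>} = hu u ` {\<alpha>. \<alpha> < OmegaOmega}"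
proof
  assume u: "u \<ge> 1"
  show "hu u ` {\<alpha>. \<alpha> < OmegaOmega} \<subseteq> {\<beta>. Dn u \<beta> \<and> \<not> Dn (Suc u) \<beta>}"
  proof
    fix x assume "x \<in> hu u ` {\<alpha>. \<alpha> < OmegaOmega}"
    then obtain \<alpha> where x: "x = hu u \<alpha>" "\<alpha> < OmegaOmega" by auto
    then obtain a where a: "\<alpha> = Below a" using lt_OO_Below by blast
    have x': "x = Below (shift u (a + s0))" using x a by (simp add: hu_def plus1 omega_mult)
    have "lk (shift u (a + s0)) u \<noteq> 0" using lk_shift_add[of u "a + s0" 0] plus_s0_nz[of a] by simp
    moreover have "shift u (a + s0) \<noteq> 0" using calculation by auto
    ultimately show "x \<in> {\<beta>. Dn u \<beta> \<and> \<not> Dn (Suc u) \<beta>}" using x' u by (auto simp: Dn_Below lk_shift)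
  qed
  show "{\<beta>. Dn u \<beta> \<and> \<not> Dn (Suc u) \<beta>} \<subseteq> hu u ` {\<alpha>. \<alpha> < OmegaOmega}"
  proof
    fix \<beta> assume "\<beta> \<in> {\<beta>. Dn u \<beta> \<and> \<not> Dn (Suc u) \<beta>}"
    then have D: "Dn u \<beta>" "\<not> Dn (Suc u) \<beta>" by auto
    then obtain c where c: "\<beta> = Below c" by (cases \<beta>) auto
    have c1: "c \<noteq> 0" "\<forall>i<u. lk c i = 0" using D(1) c u by (auto simp: Dn_Below)
    have "\<not> (\<forall>i<Suc u. lk c i = 0)" using D(2) c c1 by (auto simp: Dn_Below)
    then obtain i where i: "i < Suc u" "lk c i \<noteq> 0" by auto
    then have cu: "lk c u \<noteq> 0" using c1(2) by (cases "i = u") auto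
    obtain b where b: "shift u b = c" using unshift_ex[OF c1(2)] by blast
    have "lk b 0 \<noteq> 0" using cu b lk_shift_add[of u b 0] by simp
    then obtain a where a: "b = a + s0" using sub1 by blast
    have "hu u (Below a) = \<beta>" using a b c by (simp add: hu_def plus1 omega_mult)
    then show "\<beta> \<in> hu u ` {\<alpha>. \<alpha> < OmegaOmega}" by force
  qed
qed


lemma sm_ge:
  fixes g :: "ordww \<Rightarrow> ordww"
  assumes into: "\<And>x. x < \<beta> \<Longrightarrow> g x < \<beta>"
    and sm: "\<And>x y. x < \<beta> \<Longrightarrow> y < \<beta> \<Longrightarrow> x < y \<Longrightarrow> g x < g y"
  shows "x < \<beta> \<Longrightarrow> x \<le> g x"
proof (induction x rule: less_induct)
  case (less x)
  show ?case
  proof (rule ccontr)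
    assume "\<not> x \<le> g x"
    then have gx: "g x < x" by simp
    have gb: "g x < \<beta>" using into less.prems by simp
    have "g x \<le> g (g x)" using less.IH[OF gx gb] .
    moreover have "g (g x) < g x" using sm[OF gb less.prems gx] .
    ultimately show False by simp
  qed
qed

lemma iso_eq:
  fixes g :: "ordww \<Rightarrow> ordww"
  assumes bij: "bij_betw g {x. x < \<beta>} {x. x < \<sigma>}"
    and sm: "\<And>x y. x < \<beta> \<Longrightarrow> y < \<beta> \<Longrightarrow> x < y \<Longrightarrow> g x < g y"
  shows "\<beta> = \<sigma>"
proof (rule ccontr)
  assume ne: "\<beta> \<noteq> \<sigma>"
  have into: "x < \<beta> \<Longrightarrow> g x < \<sigma>" for x using bij by (auto simp: bij_betw_def)
  show False
  proof (cases "\<sigma> < \<beta>")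
    case True
    have "\<sigma> \<le> g \<sigma>"
      by (rule sm_ge[of \<beta> g]) (use into True sm in \<open>auto intro: less_trans\<close>)
    moreover have "g \<sigma> < \<sigma>" using into True .
    ultimately show False by simp
  next
    case False
    then have bs: "\<beta> < \<sigma>" using ne by simp
    define g' where "g' = inv_into {x. x < \<beta>} g"
    have bij': "bij_betw g' {x. x < \<sigma>} {x. x < \<beta>}" unfolding g'_def using bij by (rule bij_betw_inv_into)
    have into': "x < \<sigma> \<Longrightarrow> g' x < \<beta>" for x using bij' by (auto simp: bij_betw_def)
    have gg: "x < \<sigma> \<Longrightarrow> g (g' x) = x" for x
      unfolding g'_def using bij by (intro f_inv_into_f) (auto simp: bij_betw_def)
    have sm': "g' x < g' y" if "x < \<sigma>" "y < \<sigma>" "x < y" for x y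
    proof (rule ccontr)
      assume "\<not> g' x < g' y"
      then have "g' y = g' x \<or> g' y < g' x" by auto
      then show False
      proof
        assume "g' y = g' x"
        then have "g (g' y) = g (g' x)" by simp
        then show False using gg that by simp
      next
        assume "g' y < g' x"
        then have "g (g' y) < g (g' x)" using sm into' that by simp
        then show False using gg that by simp
      qed
    qed
    have "\<beta> \<le> g' \<beta>"
      by (rule sm_ge[of \<sigma> g']) (use into' bs sm' in \<open>auto intro: less_trans\<close>)
    moreover have "g' \<beta> < \<beta>" using into' bs .
    ultimately show False by simp
  qed
qed

context posK
begin

lemma DK: "(derived ^^ n) K = f ` {\<beta>. Dn n \<beta>}"
proof (induction n)
  case 0
  then show ?case using K_eq by (simp add: Dn_def)
next
  case (Suc n)
  have "(derived ^^ Suc n) K = derived (f ` {\<beta>. Dn n \<beta>})" using Suc by simp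
  also have "\<dots> = f ` {\<beta>. \<beta> \<noteq> 0 \<and> (\<forall>\<gamma><\<beta>. \<exists>\<delta>\<in>{\<beta>. Dn n \<beta>}. \<gamma> < \<delta> \<and> \<delta> < \<beta>)}"
    by (rule derived_img)
  also have "{\<beta>. \<beta> \<noteq> 0 \<and> (\<forall>\<gamma><\<beta>. \<exists>\<delta>\<in>{\<beta>. Dn n \<beta>}. \<gamma> < \<delta> \<and> \<delta> < \<beta>)} = {\<beta>. Dn (Suc n) \<beta>}"
    using L1[of _ n] by auto
  finally show ?case .
qed

lemma seg: "{y \<in> K. f \<sigma> < y} = f ` {\<gamma>. \<gamma> < \<sigma>}"
  using K_eq by (auto simp: less_iff)

lemma is_at_f: "is_at K \<beta> (f \<beta>)"
  unfolding is_at_def rev_otype_def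
proof (intro conjI exI[of _ f])
  show "f \<beta> \<in> K" by (rule fK)
  show "bij_betw f {\<gamma>. \<gamma> < \<beta>} {y \<in> K. f \<beta> < y}"
    unfolding seg using inj_f by (intro bij_betw_imageI) (auto intro: inj_on_subset)
  show "\<forall>\<beta>' \<gamma>. \<beta>' < \<beta> \<longrightarrow> \<gamma> < \<beta> \<longrightarrow> \<beta>' < \<gamma> \<longrightarrow> f \<gamma> < f \<beta>'" using dec by blast
qed

lemma is_at_uniq: "is_at K \<beta> x \<Longrightarrow> x = f \<beta>"
proof -
  assume "is_at K \<beta> x"
  then have xK: "x \<in> K" and ro: "rev_otype {y \<in> K. x < y} \<beta>" by (auto simp: is_at_def)
  obtain \<sigma> where x: "x = f \<sigma>" using xK K_eq by auto
  obtain h where h: "bij_betw h {\<gamma>. \<gamma> < \<beta>} (f ` {\<gamma>. \<gamma> < \<sigma>})"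
     and hd: "\<forall>\<beta>' \<gamma>. \<beta>' < \<beta> \<longrightarrow> \<gamma> < \<beta> \<longrightarrow> \<beta>' < \<gamma> \<longrightarrow> h \<gamma> < h \<beta>'"
    using ro unfolding rev_otype_def x seg by blast
  define g where "g = inv_into {\<gamma>. \<gamma> < \<sigma>} f \<circ> h"
  have fb: "bij_betw f {\<gamma>. \<gamma> < \<sigma>} (f ` {\<gamma>. \<gamma> < \<sigma>})"
    using inj_f by (intro bij_betw_imageI) (auto intro: inj_on_subset)
  have bg: "bij_betw g {\<gamma>. \<gamma> < \<beta>} {\<gamma>. \<gamma> < \<sigma>}"
    unfolding g_def using h bij_betw_inv_into[OF fb] by (rule bij_betw_trans)
  have fg: "\<gamma> < \<beta> \<Longrightarrow> f (g \<gamma>) = h \<gamma>" for \<gamma>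
  proof -
    assume "\<gamma> < \<beta>"
    then have "h \<gamma> \<in> f ` {\<gamma>. \<gamma> < \<sigma>}" using h by (auto simp: bij_betw_def)
    then show ?thesis unfolding g_def by (simp add: f_inv_into_f)
  qed
  have "g a < g b" if "a < \<beta>" "b < \<beta>" "a < b" for a b
  proof -
    have "h b < h a" using hd that by blast
    then have "f (g b) < f (g a)" using fg that by simp
    then show ?thesis by (simp add: less_iff)
  qed
  then have "\<beta> = \<sigma>" using iso_eq[OF bg] by blast
  then show ?thesis using x by simp
qed

lemma ord_at_f: "ord_at K \<beta> = f \<beta>"
  unfolding ord_at_def using is_at_f is_at_uniq by (rule the_equality)

lemma is_at_img:
  assumes sm: "\<And>x y. x \<in> Dm \<Longrightarrow> y \<in> Dm \<Longrightarrow> x < y \<Longrightarrow> h x < h y"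
    and dc: "\<And>x y. y \<in> Dm \<Longrightarrow> x < y \<Longrightarrow> x \<in> Dm"
    and a: "\<alpha> \<in> Dm"
  shows "is_at (f ` (h ` Dm)) \<alpha> (f (h \<alpha>))"
proof -
  have lt: "h \<delta> < h \<alpha> \<Longrightarrow> \<delta> \<in> Dm \<Longrightarrow> \<delta> < \<alpha>" for \<delta>
  proof (rule ccontr)
    assume "h \<delta> < h \<alpha>" "\<delta> \<in> Dm" "\<not> \<delta> < \<alpha>"
    then have "\<delta> = \<alpha> \<or> \<alpha> < \<delta>" by auto
    then show False using sm[OF a \<open>\<delta> \<in> Dm\<close>] \<open>h \<delta> < h \<alpha>\<close> by auto
  qed
  have S: "{y \<in> f ` (h ` Dm). f (h \<alpha>) < y} = (f \<circ> h) ` {\<delta>. \<delta> < \<alpha>}"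
  proof
    show "{y \<in> f ` (h ` Dm). f (h \<alpha>) < y} \<subseteq> (f \<circ> h) ` {\<delta>. \<delta> < \<alpha>}"
    proof
      fix y assume "y \<in> {y \<in> f ` (h ` Dm). f (h \<alpha>) < y}"
      then obtain \<delta> where d: "\<delta> \<in> Dm" "y = f (h \<delta>)" "f (h \<alpha>) < f (h \<delta>)" by auto
      then have "h \<delta> < h \<alpha>" by (simp add: less_iff)
      then have "\<delta> < \<alpha>" using lt d(1) by blast
      then show "y \<in> (f \<circ> h) ` {\<delta>. \<delta> < \<alpha>}" using d by auto
    qed
    show "(f \<circ> h) ` {\<delta>. \<delta> < \<alpha>} \<subseteq> {y \<in> f ` (h ` Dm). f (h \<alpha>) < y}"
    proof
      fix y assume "y \<in> (f \<circ> h) ` {\<delta>. \<delta> < \<alpha>}"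
      then obtain \<delta> where d: "\<delta> < \<alpha>" "y = f (h \<delta>)" by auto
      have dD: "\<delta> \<in> Dm" using dc[OF a d(1)] .
      have "h \<delta> < h \<alpha>" using sm[OF dD a d(1)] .
      then have "f (h \<alpha>) < f (h \<delta>)" by (rule dec)
      then show "y \<in> {y \<in> f ` (h ` Dm). f (h \<alpha>) < y}" using d dD by auto
    qed
  qed
  have dec2: "(f \<circ> h) c < (f \<circ> h) b" if "b < \<alpha>" "c < \<alpha>" "b < c" for b c
  proof -
    have "b \<in> Dm" "c \<in> Dm" using dc[OF a] that by auto
    then have "h b < h c" using sm that by blast
    then show ?thesis by (simp add: dec)
  qed
  have inj: "inj_on (f \<circ> h) {\<delta>. \<delta> < \<alpha>}"
  proof (rule inj_onI)
    fix b c assume "b \<in> {\<delta>. \<delta> < \<alpha>}" "c \<in> {\<delta>. \<delta> < \<alpha>}" "(f \<circ> h) b = (f \<circ> h) c"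
    then show "b = c" using dec2[of b c] dec2[of c b] by (cases b c rule: linorder_cases) auto
  qed
  show ?thesis unfolding is_at_def rev_otype_def S
  proof (intro conjI exI[of _ "f \<circ> h"])
    show "f (h \<alpha>) \<in> f ` h ` Dm" using a by auto
    show "bij_betw (f \<circ> h) {\<beta>. \<beta> < \<alpha>} ((f \<circ> h) ` {\<delta>. \<delta> < \<alpha>})" using inj by (rule bij_betw_imageI) simp
    show "\<forall>\<beta> \<gamma>. \<beta> < \<alpha> \<longrightarrow> \<gamma> < \<alpha> \<longrightarrow> \<beta> < \<gamma> \<longrightarrow> (f \<circ> h) \<gamma> < (f \<circ> h) \<beta>"
      using dec2 by blast
  qed
qed

end


theorem mainTheorem3:
  fixes K :: "real set" and \<rho> :: real and \<mu> :: nat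
  assumes "self_similar K \<rho> \<mu>"
  defines "T \<equiv> \<lambda>u. (derived ^^ u) K - (derived ^^ (u + 1)) K"
  shows "(\<forall>n::nat. n \<ge> 1 \<longrightarrow> (\<forall>\<alpha>::ordww.
            is_at ((derived ^^ n) K) \<alpha> (ord_at K (omega_pow n * (1 + \<alpha>)))))
       \<and> (\<forall>\<alpha>::ordww. \<alpha> < OmegaOmega \<longrightarrow>
            is_at (T 0) \<alpha> (ord_at K (if \<alpha> < omega then \<alpha> else \<alpha> + 1)))
       \<and> (\<forall>u::nat. u \<ge> 1 \<longrightarrow> (\<forall>\<alpha>::ordww. \<alpha> < OmegaOmega \<longrightarrow>
            is_at (T u) \<alpha> (ord_at K (omega_pow u * (\<alpha> + 1)))))"
proof -
  have cK: "compact K" and rw: "rev_otype_ww1 K" using assms(1) by (auto simp: self_similar_def)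
  obtain f where fb: "bij_betw f {\<beta>. \<beta> \<le> OmegaOmega} K" and fd: "\<forall>\<beta> \<gamma>. \<beta> < \<gamma> \<longrightarrow> f \<gamma> < f \<beta>"
    using rw unfolding rev_otype_ww1_def by blast
  have U: "{\<beta>. \<beta> \<le> OmegaOmega} = UNIV" using le_OO by auto
  interpret posK K f
    using cK fb fd U by unfold_locales auto
  have inj: "inj f" by (rule inj_f)
  have P1: "is_at ((derived ^^ n) K) \<alpha> (ord_at K (omega_pow n * (1 + \<alpha>)))" if n: "n \<ge> 1" for n \<alpha>
  proof -
    have "(derived ^^ n) K = f ` (h1 n ` UNIV)" using DK img1[OF n] by simp
    moreover have "ord_at K (omega_pow n * (1 + \<alpha>)) = f (h1 n \<alpha>)" by (simp add: ord_at_f h1_def)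
    moreover have "is_at (f ` (h1 n ` UNIV)) \<alpha> (f (h1 n \<alpha>))"
      by (rule is_at_img) (auto intro: h1_mono)
    ultimately show ?thesis by simp
  qed
  have Tu: "T u = f ` ({\<beta>. Dn u \<beta>} - {\<beta>. Dn (Suc u) \<beta>})" for u
    unfolding T_def using DK[of u] DK[of "Suc u"] by (simp add: image_set_diff[OF inj])
  have P2: "is_at (T 0) \<alpha> (ord_at K (if \<alpha> < omega then \<alpha> else \<alpha> + 1))" if a: "\<alpha> < OmegaOmega" for \<alpha>
  proof -
    have "{\<beta>. Dn 0 \<beta>} - {\<beta>. Dn (Suc 0) \<beta>} = {\<beta>. \<not> Dn 1 \<beta>}" by (auto simp: Dn_def)
    then have "T 0 = f ` (h0 ` {\<alpha>. \<alpha> < OmegaOmega})" using Tu[of 0] img0 by simp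
    moreover have "ord_at K (if \<alpha> < omega then \<alpha> else \<alpha> + 1) = f (h0 \<alpha>)" by (simp add: ord_at_f h0_def)
    moreover have "is_at (f ` (h0 ` {\<alpha>. \<alpha> < OmegaOmega})) \<alpha> (f (h0 \<alpha>))"
      by (rule is_at_img) (use a in \<open>auto intro: h0_mono less_trans\<close>)
    ultimately show ?thesis by simp
  qed
  have P3: "is_at (T u) \<alpha> (ord_at K (omega_pow u * (\<alpha> + 1)))" if u: "u \<ge> 1" and a: "\<alpha> < OmegaOmega" for u \<alpha>
  proof -
    have "T u = f ` (hu u ` {\<alpha>. \<alpha> < OmegaOmega})" using Tu[of u] imgu[OF u] by (simp add: set_diff_eq)
    moreover have "ord_at K (omega_pow u * (\<alpha> + 1)) = f (hu u \<alpha>)" by (simp add: ord_at_f hu_def)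
    moreover have "is_at (f ` (hu u ` {\<alpha>. \<alpha> < OmegaOmega})) \<alpha> (f (hu u \<alpha>))"
      by (rule is_at_img) (use a in \<open>auto intro: hu_mono less_trans\<close>)
    ultimately show ?thesis by simp
  qed
  show ?thesis using P1 P2 P3 by blast
qed

end
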